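(* Let $\Gamma=(\mathcal{V},\mathcal{H})$ be a bipartite oriented hypergraph. Then $\Gamma$ is isospectral to its underlying hypergraph $\Gamma'$, i.e. the normalized Laplacian $L$ of $\Gamma$ and the normalized Laplacian $L'$ of $\Gamma'$ have the same eigenvalues with the same multiplicities. In particular, $\Gamma$ is isospectral to every other bipartite oriented hypergraph that has the same underlying hypergraph as $\Gamma$.
   Context: An oriented hypergraph is a pair $\Gamma=(\mathcal{V},\mathcal{H})$ where $\mathcal{V}=\{v_1,\ldots,v_N\}$ is a finite set of vertices and each hyperedge $h\in\mathcal{H}$ is a pair $(h_{in},h_{out})$ of disjoint nonempty subsets of $\mathcal{V}$ (inputs and outputs). Standing assumption: $\Gamma$ has no isolated vertices. Two vertices are co-oriented in $h$ if they lie in the same one of $h_{in},h_{out}$, and anti-oriented in $h$ if they lie in different ones. The degree $\deg(v)$ is the number of hyperedges containing $v$ (i.e. with $v\in h_{in}\cup h_{out}$); $D$ is the diagonal matrix of degrees. The adjacency matrix $A$ has $A_{ii}=0$ and, for $i\neq j$, $A_{ij}=\#\{h: v_i,v_j \text{ anti-oriented in } h\}-\#\{h: v_i,v_j\text{ co-oriented in } h\}$. The normalized Laplacian is $L=\mathrm{Id}-D^{-1}A$. The underlying hypergraph $\Gamma'$ has the same vertices and hyperedges $(h_{in}\cup h_{out},\emptyset)$ for $h\in\mathcal{H}$; hence its degrees coincide with those of $\Gamma$, its adjacency matrix is $A'_{ii}=0$, $A'_{ij}=-\#\{h\in\mathcal{H}: v_i,v_j\in h_{in}\cup h_{out}\}$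 for $i\ne j$, and $L'=\mathrm{Id}-D^{-1}A'$. $\Gamma$ is bipartite if $\mathcal{V}=\mathcal{V}_1\sqcup\mathcal{V}_2$ such that every hyperedge either has all its inputs in $\mathcal{V}_1$ and all its outputs in $\mathcal{V}_2$, or all its inputs in $\mathcal{V}_2$ and all its outputs in $\mathcal{V}_1$. *)

theory Defs
  imports "Jordan_Normal_Form.Char_Poly" "HOL-Library.Multiset"
begin

text \<open>Vertices are 0..<N. A hyperedge is a pair (inputs, outputs) of vertex sets;
  the family of hyperedges is a multiset (the paper's set of hyperedges is the
  special case of multiplicity at most one).\<close>

type_synonym hedge = "nat set \<times> nat set"

definition oriented_hypergraph :: "nat \<Rightarrow> hedge multiset \<Rightarrow> bool" where
  "oriented_hypergraph N H \<longleftrightarrow>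
     (\<forall>h \<in># H. fst h \<noteq> {} \<and> snd h \<noteq> {} \<and> fst h \<inter> snd h = {}
               \<and> fst h \<union> snd h \<subseteq> {..<N})
   \<and> (\<forall>v < N. \<exists>h \<in># H. v \<in> fst h \<union> snd h)"

definition bipartite :: "nat \<Rightarrow> hedge multiset \<Rightarrow> bool" where
  "bipartite N H \<longleftrightarrow> (\<exists>V1 V2. V1 \<union> V2 = {..<N} \<and> V1 \<inter> V2 = {} \<and>
     (\<forall>h \<in># H. (fst h \<subseteq> V1 \<and> snd h \<subseteq> V2) \<or> (fst h \<subseteq> V2 \<and> snd h \<subseteq> V1)))"

definition hdeg :: "hedge multiset \<Rightarrow> nat \<Rightarrow> nat" where
  "hdeg H v = size (filter_mset (\<lambda>h. v \<in> fst h \<union> snd h) H)"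

definition co_oriented :: "hedge \<Rightarrow> nat \<Rightarrow> nat \<Rightarrow> bool" where
  "co_oriented h u v \<longleftrightarrow> (u \<in> fst h \<and> v \<in> fst h) \<or> (u \<in> snd h \<and> v \<in> snd h)"

definition anti_oriented :: "hedge \<Rightarrow> nat \<Rightarrow> nat \<Rightarrow> bool" where
  "anti_oriented h u v \<longleftrightarrow> (u \<in> fst h \<and> v \<in> snd h) \<or> (u \<in> snd h \<and> v \<in> fst h)"

definition adj :: "hedge multiset \<Rightarrow> nat \<Rightarrow> nat \<Rightarrow> int" where
  "adj H i j = (if i = j then 0 else
     int (size (filter_mset (\<lambda>h. anti_oriented h i j) H))
     - int (size (filter_mset (\<lambda>h. co_oriented h i j) H)))"

definition norm_laplacian :: "nat \<Rightarrow> hedge multiset \<Rightarrow> real mat" where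
  "norm_laplacian N H = mat N N (\<lambda>(i, j).
     (if i = j then 1 else 0) - real_of_int (adj H i j) / real (hdeg H i))"

definition underlying :: "hedge multiset \<Rightarrow> hedge multiset" where
  "underlying H = image_mset (\<lambda>h. (fst h \<union> snd h, {})) H"

text \<open>Isospectral: the normalized Laplacians have the same eigenvalues with the same
  (algebraic) multiplicities, i.e. the same characteristic polynomial.\<close>
definition isospectral :: "nat \<Rightarrow> hedge multiset \<Rightarrow> hedge multiset \<Rightarrow> bool" where
  "isospectral N H1 H2 \<longleftrightarrow> char_poly (norm_laplacian N H1) = char_poly (norm_laplacian N H2)"

end

theory Submission
  imports Defs
begin

definition dmat :: "nat \<Rightarrow> (nat \<Rightarrow> real) \<Rightarrow> real mat" where
  "dmat N d = mat N N (\<lambda>(i,j). if i = j then d i else 0)"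

lemma dmat_left:
  assumes B: "B \<in> carrier_mat N N"
  shows "dmat N d * B = mat N N (\<lambda>(i,j). d i * B $$ (i,j))"
proof (rule eq_matI)
  fix i j assume i: "i < dim_row (mat N N (\<lambda>(i,j). d i * B $$ (i,j)))"
    and j: "j < dim_col (mat N N (\<lambda>(i,j). d i * B $$ (i,j)))"
  hence i': "i < N" and j': "j < N" by auto
  have "(dmat N d * B) $$ (i,j) = (\<Sum>k<N. (if i = k then d i else 0) * B $$ (k,j))"
    using i' j' B by (simp add: dmat_def scalar_prod_def atLeast0LessThan cong: if_cong)
  also have "\<dots> = d i * B $$ (i,j)"
    by (simp add: if_distrib[of "\<lambda>x. x * _"] sum.delta i' cong: if_cong)
  finally show "(dmat N d * B) $$ (i,j) = mat N N (\<lambda>(i,j). d i * B $$ (i,j)) $$ (i,j)"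
    using i' j' by simp
qed (use B in \<open>auto simp: dmat_def\<close>)

lemma dmat_right:
  assumes B: "B \<in> carrier_mat N N"
  shows "B * dmat N d = mat N N (\<lambda>(i,j). B $$ (i,j) * d j)"
proof (rule eq_matI)
  fix i j assume i: "i < dim_row (mat N N (\<lambda>(i,j). B $$ (i,j) * d j))"
    and j: "j < dim_col (mat N N (\<lambda>(i,j). B $$ (i,j) * d j))"
  hence i': "i < N" and j': "j < N" by auto
  have "(B * dmat N d) $$ (i,j) = (\<Sum>k<N. B $$ (i,k) * (if k = j then d j else 0))"
    using i' j' B by (simp add: dmat_def scalar_prod_def atLeast0LessThan cong: if_cong)
  also have "\<dots> = B $$ (i,j) * d j"
    by (simp add: if_distrib[of "\<lambda>x. _ * x"] sum.delta' j' cong: if_cong)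
  finally show "(B * dmat N d) $$ (i,j) = mat N N (\<lambda>(i,j). B $$ (i,j) * d j) $$ (i,j)"
    using i' j' by simp
qed (use B in \<open>auto simp: dmat_def\<close>)

lemma dmat_carrier: "dmat N d \<in> carrier_mat N N" by (simp add: dmat_def)

lemma dmat_sq:
  assumes "\<And>i. d i * d i = 1"
  shows "dmat N d * dmat N d = 1\<^sub>m N"
proof -
  have "dmat N d * dmat N d = mat N N (\<lambda>(i,j). d i * dmat N d $$ (i,j))"
    by (rule dmat_left[OF dmat_carrier])
  also have "\<dots> = 1\<^sub>m N" using assms by (auto simp: dmat_def intro!: eq_matI)
  finally show ?thesis .
qed

lemma hdeg_underlying: "hdeg (underlying H) v = hdeg H v"
  by (simp add: hdeg_def underlying_def filter_mset_image_mset)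

lemma adj_underlying: "adj (underlying H) i j =
   (if i = j then 0 else - int (size (filter_mset (\<lambda>h. i \<in> fst h \<union> snd h \<and> j \<in> fst h \<union> snd h) H)))"
  by (simp add: adj_def underlying_def filter_mset_image_mset anti_oriented_def co_oriented_def)

lemma adj_bip:
  assumes V: "V1 \<union> V2 = {..<N}" "V1 \<inter> V2 = {}"
    and hs: "\<forall>h \<in># H. (fst h \<subseteq> V1 \<and> snd h \<subseteq> V2) \<or> (fst h \<subseteq> V2 \<and> snd h \<subseteq> V1)"
    and i: "i < N" and j: "j < N"
  shows "adj H i j = (if (i \<in> V1) = (j \<in> V1) then 1 else -1) * adj (underlying H) i j"
proof (cases "i = j")
  case True thus ?thesis by (simp add: adj_def adj_underlying)
next
  case ne: False
  let ?B = "\<lambda>h. i \<in> fst h \<union> snd h \<and> j \<in> fst h \<union> snd h"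
  have hs': "\<And>h. h \<in># H \<Longrightarrow> (fst h \<subseteq> V1 \<and> snd h \<subseteq> V2) \<or> (fst h \<subseteq> V2 \<and> snd h \<subseteq> V1)"
    using hs by blast
  have iV: "i \<in> V1 \<or> i \<in> V2" "j \<in> V1 \<or> j \<in> V2" using V i j by auto
  show ?thesis
  proof (cases "(i \<in> V1) = (j \<in> V1)")
    case True
    have a: "filter_mset (\<lambda>h. anti_oriented h i j) H = filter_mset (\<lambda>h. False) H"
      by (rule filter_mset_cong[OF refl]) (use hs' V True iV in \<open>auto simp: anti_oriented_def dest!: hs'\<close>)
    have c: "filter_mset (\<lambda>h. co_oriented h i j) H = filter_mset ?B H"
      by (rule filter_mset_cong[OF refl]) (use hs' V True iV in \<open>auto simp: co_oriented_def dest!: hs'\<close>)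
    show ?thesis using True ne by (simp add: adj_def[of H] adj_underlying a c)
  next
    case False
    have a: "filter_mset (\<lambda>h. anti_oriented h i j) H = filter_mset ?B H"
      by (rule filter_mset_cong[OF refl]) (use hs' V False iV in \<open>auto simp: anti_oriented_def dest!: hs'\<close>)
    have c: "filter_mset (\<lambda>h. co_oriented h i j) H = filter_mset (\<lambda>h. False) H"
      by (rule filter_mset_cong[OF refl]) (use hs' V False iV in \<open>auto simp: co_oriented_def dest!: hs'\<close>)
    show ?thesis using False ne by (simp add: adj_def[of H] adj_underlying a c)
  qed
qed

lemma iso_under:
  assumes "bipartite N H"
  shows "isospectral N H (underlying H)"
proof -
  obtain V1 V2 where V: "V1 \<union> V2 = {..<N}" "V1 \<inter> V2 = {}"
    and hs: "\<forall>h \<in># H. (fst h \<subseteq> V1 \<and> snd h \<subseteq> V2) \<or> (fst h \<subseteq> V2 \<and> snd h \<subseteq> V1)"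
    using assms unfolding bipartite_def by blast
  define d where "d = (\<lambda>i. if i \<in> V1 then 1 else (-1::real))"
  have dd: "\<And>i. d i * d i = 1" by (simp add: d_def)
  let ?L = "norm_laplacian N (underlying H)"
  have Lc: "?L \<in> carrier_mat N N" by (simp add: norm_laplacian_def)
  have eq: "norm_laplacian N H = dmat N d * ?L * dmat N d"
  proof -
    have "dmat N d * ?L * dmat N d = mat N N (\<lambda>(i,j). d i * ?L $$ (i,j) * d j)"
      unfolding dmat_left[OF Lc] by (subst dmat_right) (auto intro!: eq_matI)
    also have "\<dots> = norm_laplacian N H"
    proof (rule eq_matI)
      fix i j assume "i < dim_row (norm_laplacian N H)" "j < dim_col (norm_laplacian N H)"
      hence i: "i < N" and j: "j < N" by (auto simp: norm_laplacian_def)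
      have A: "adj H i j = (if (i \<in> V1) = (j \<in> V1) then 1 else -1) * adj (underlying H) i j"
        by (rule adj_bip[OF V hs i j])
      show "mat N N (\<lambda>(i,j). d i * ?L $$ (i,j) * d j) $$ (i,j) = norm_laplacian N H $$ (i,j)"
        using i j dd[of i] A
        by (cases "i = j") (auto simp: norm_laplacian_def hdeg_underlying d_def adj_def)
    qed (auto simp: norm_laplacian_def)
    finally show ?thesis by simp
  qed
  have LHc: "norm_laplacian N H \<in> carrier_mat N N" by (simp add: norm_laplacian_def)
  have "similar_mat (norm_laplacian N H) ?L"
    by (rule similar_matI[where n=N and P="dmat N d" and Q="dmat N d"])
       (use Lc dmat_carrier[of N d] eq dmat_sq[OF dd, of N] LHc in \<open>auto simp del: dmat_def\<close>)
  thus ?thesis unfolding isospectral_def by (rule char_poly_similar)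
qed

theorem mainTheorem1:
  fixes N :: nat and H :: "hedge multiset"
  assumes "oriented_hypergraph N H" and "bipartite N H"
  shows "isospectral N H (underlying H)
    \<and> (\<forall>H2. oriented_hypergraph N H2 \<and> bipartite N H2 \<and> underlying H2 = underlying H
           \<longrightarrow> isospectral N H H2)"
proof -
  have 1: "isospectral N H (underlying H)" by (rule iso_under[OF assms(2)])
  have "isospectral N H H2" if "bipartite N H2" "underlying H2 = underlying H" for H2
  proof -
    have "isospectral N H2 (underlying H2)" by (rule iso_under[OF that(1)])
    thus ?thesis using 1 that(2) unfolding isospectral_def by simp
  qed
  thus ?thesis using 1 by blast
qed

end
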